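(* Let $1\le k\le n$ and let $\mathcal{G}_{k-1}$ be a nearest-neighbor graph of a storage network with node set $\mathcal{N}$ and RTT function $\tau$. If $\mathcal{C}$ is a linear storage code that is admissible on $\mathcal{G}_{k-1}$, then for every node $i\in\mathcal{N}$, \[ L_{max}^{(i)}(\mathcal{C})=\lambda_{k-1}^{(i)}. \]
   Context: A storage network consists of $n$ nodes $\mathcal{N}=\{1,\dots,n\}$ and a round-trip-time (RTT) function $\tau:\mathcal{N}\times\mathcal{N}\to\mathbb{R}_{\ge 0}$ with $\tau(i,j)=\tau(j,i)$ and $\tau(i,i)=0$. There are $k\le n$ information files $W_1,\dots,W_k$, each consisting of $\alpha$ sub-packets in a finite field $\mathcal{F}$; node $i$ stores $X_i\in\mathcal{F}^\alpha$. A linear storage code $\mathcal{C}$ is given by a $(k\alpha\times n\alpha)$ matrix $G$ over $\mathcal{F}$ of rank $k\alpha$ with $\underline{X}^T=\underline{W}^T G$ (concatenated sub-packets). File $W_j$ is decodable from $S\subseteq\mathcal{N}$ if there is a function $\varphi$ with $\varphi((X_t)_{t\in S})=W_j$ for all choices of the files. The latency $l_j^{(i)}=\min\{L\ge 0: W_j$ decodable from $\{t:\tau(t,i)\le L\}\}$, and $L_{max}^{(i)}(\mathcal{C})=\max_{j\in[k]}l_j^{(i)}$. For node $i$, $\lambda_0^{(i)}\le\dots\le\lambda_{n-1}^{(i)}$ is the sorted list of $\{\tau(j,i):j\in\mathcal{N}\}$. A nearest-neighbor graph $\mathcal{G}_{k-1}$ is a directed graph on $\mathcal{N}$ in which each node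 $i$ has incoming edges from exactly $k-1$ other nodes whose RTTs to $i$ are the $k-1$ smallest values $\lambda_1^{(i)},\dots,\lambda_{k-1}^{(i)}$ (ties broken arbitrarily, so several such graphs may exist); these $k-1$ nodes are the neighbors of $i$. A code is admissible on a directed graph $\mathcal{D}$ on $\mathcal{N}$ if for every node $i$ and every $j\in[k]$, $W_j$ is decodable from $\{i\}$ together with the nodes having an edge into $i$ in $\mathcal{D}$. *)

theory Defs
  imports "Jordan_Normal_Form.DL_Rank"
begin

(* Conventions: nodes are 1..n, files are 1..k, sub-packets are indexed 0..<alpha.  The code is X^T = W^T G, i.e. X = G^T W, and
   node t stores coordinates (t-1)*alpha + a, a < alpha, of X. *)

definition file_of :: "nat \<Rightarrow> nat \<Rightarrow> 'f vec \<Rightarrow> 'f vec" where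
  "file_of \<alpha> j W = vec \<alpha> (\<lambda>a. W $ ((j - 1) * \<alpha> + a))"

definition stored :: "'f::field mat \<Rightarrow> nat \<Rightarrow> 'f vec \<Rightarrow> nat \<Rightarrow> 'f vec" where
  "stored G \<alpha> W t = vec \<alpha> (\<lambda>a. (transpose_mat G *\<^sub>v W) $ ((t - 1) * \<alpha> + a))"

definition decodable :: "'f::field mat \<Rightarrow> nat \<Rightarrow> nat \<Rightarrow> nat \<Rightarrow> nat set \<Rightarrow> bool" where
  "decodable G k \<alpha> j S \<longleftrightarrow>
     (\<exists>\<phi>. \<forall>W \<in> carrier_vec (k * \<alpha>). \<phi> (restrict (stored G \<alpha> W) S) = file_of \<alpha> j W)"

definition linear_storage_code :: "nat \<Rightarrow> nat \<Rightarrow> nat \<Rightarrow> 'f::field mat \<Rightarrow> bool" where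
  "linear_storage_code n k \<alpha> G \<longleftrightarrow>
     G \<in> carrier_mat (k * \<alpha>) (n * \<alpha>) \<and> vec_space.rank (k * \<alpha>) G = k * \<alpha>"

definition latency :: "nat \<Rightarrow> (nat \<Rightarrow> nat \<Rightarrow> real) \<Rightarrow> 'f::field mat \<Rightarrow> nat \<Rightarrow> nat \<Rightarrow> nat \<Rightarrow> nat \<Rightarrow> real" where
  "latency n \<tau> G k \<alpha> j i =
     (LEAST L. L \<ge> 0 \<and> decodable G k \<alpha> j {t \<in> {1..n}. \<tau> t i \<le> L})"

definition L_max :: "nat \<Rightarrow> (nat \<Rightarrow> nat \<Rightarrow> real) \<Rightarrow> 'f::field mat \<Rightarrow> nat \<Rightarrow> nat \<Rightarrow> nat \<Rightarrow> real" where
  "L_max n \<tau> G k \<alpha> i = Max ((\<lambda>j. latency n \<tau> G k \<alpha> j i) ` {1..k})"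

(* lambda_m^(i): m-th entry (0-based) of the sorted list of tau(j,i), j in N *)
definition rtt_sorted :: "nat \<Rightarrow> (nat \<Rightarrow> nat \<Rightarrow> real) \<Rightarrow> nat \<Rightarrow> real list" where
  "rtt_sorted n \<tau> i = sort (map (\<lambda>j. \<tau> j i) [1..<n+1])"

definition lam :: "nat \<Rightarrow> (nat \<Rightarrow> nat \<Rightarrow> real) \<Rightarrow> nat \<Rightarrow> nat \<Rightarrow> real" where
  "lam n \<tau> i m = rtt_sorted n \<tau> i ! m"

definition in_nbrs :: "(nat \<times> nat) set \<Rightarrow> nat \<Rightarrow> nat set" where
  "in_nbrs E i = {t. (t, i) \<in> E}"

definition nearest_neighbor_graph :: "nat \<Rightarrow> nat \<Rightarrow> (nat \<Rightarrow> nat \<Rightarrow> real) \<Rightarrow> (nat \<times> nat) set \<Rightarrow> bool" where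
  "nearest_neighbor_graph n k \<tau> E \<longleftrightarrow>
     E \<subseteq> {1..n} \<times> {1..n} \<and>
     (\<forall>i \<in> {1..n}. i \<notin> in_nbrs E i \<and> card (in_nbrs E i) = k - 1 \<and>
        image_mset (\<lambda>t. \<tau> t i) (mset_set (in_nbrs E i)) = mset (map (lam n \<tau> i) [1..<k]))"

definition admissible :: "nat \<Rightarrow> nat \<Rightarrow> nat \<Rightarrow> 'f::field mat \<Rightarrow> (nat \<times> nat) set \<Rightarrow> bool" where
  "admissible n k \<alpha> G D \<longleftrightarrow>
     (\<forall>i \<in> {1..n}. \<forall>j \<in> {1..k}. decodable G k \<alpha> j ({i} \<union> in_nbrs D i))"

end

theory Submission imports Defs begin

lemma card_carrier_vec_fin:
  "card (carrier_vec d :: 'f::finite vec set) = card (UNIV :: 'f set) ^ d"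
proof -
  have "bij_betw (\<lambda>v. restrict (\<lambda>i. v $ i) {0..<d}) (carrier_vec d :: 'f vec set)
          (PiE {0..<d} (\<lambda>_. UNIV))"
  proof (rule bij_betw_byWitness[where f' = "\<lambda>f. vec d f"])
    show "\<forall>a\<in>carrier_vec d. vec d (restrict (\<lambda>i. a $ i) {0..<d}) = (a :: 'f vec)"
      by (auto intro!: eq_vecI)
    show "\<forall>a'\<in>PiE {0..<d} (\<lambda>_. UNIV :: 'f set). restrict (\<lambda>i. vec d a' $ i) {0..<d} = a'"
      by (auto simp: PiE_def extensional_def fun_eq_iff)
    show "(\<lambda>v. restrict (\<lambda>i. v $ i) {0..<d}) ` (carrier_vec d :: 'f vec set) \<subseteq> PiE {0..<d} (\<lambda>_. UNIV)"
      by auto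
    show "(\<lambda>f. vec d f) ` PiE {0..<d} (\<lambda>_. UNIV :: 'f set) \<subseteq> carrier_vec d"
      by auto
  qed
  then have "card (carrier_vec d :: 'f vec set) = card (PiE {0..<d} (\<lambda>_. UNIV :: 'f set))"
    by (rule bij_betw_same_card)
  also have "\<dots> = card (UNIV :: 'f set) ^ d" by (simp add: card_PiE)
  finally show ?thesis .
qed

lemma finite_carrier_vec_fin: "finite (carrier_vec d :: 'f::finite vec set)"
  by (rule card_ge_0_finite) (simp add: card_carrier_vec_fin finite_UNIV_card_ge_0)

lemma decodable_mono:
  assumes "decodable G k \<alpha> j S" "S \<subseteq> T"
  shows "decodable G k \<alpha> j T"
proof -
  obtain \<phi> where p: "\<forall>W \<in> carrier_vec (k * \<alpha>). \<phi> (restrict (stored G \<alpha> W) S) = file_of \<alpha> j W"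
    using assms(1) unfolding decodable_def by blast
  have "\<forall>W \<in> carrier_vec (k * \<alpha>). (\<lambda>x. \<phi> (restrict x S)) (restrict (stored G \<alpha> W) T) = file_of \<alpha> j W"
    using p assms(2) by (simp add: restrict_restrict Int_absorb1)
  then show ?thesis unfolding decodable_def by (intro exI[of _ "\<lambda>x. \<phi> (restrict x S)"])
qed

lemma not_all_decodable:
  fixes G :: "'f::{field,finite} mat"
  assumes fin: "finite S" and cS: "card S < k" and a: "0 < \<alpha>"
    and dec: "\<forall>j\<in>{1..k}. decodable G k \<alpha> j S"
  shows False
proof -
  obtain \<phi> where p: "\<And>j W. j \<in> {1..k} \<Longrightarrow> W \<in> carrier_vec (k * \<alpha>) \<Longrightarrow>
       \<phi> j (restrict (stored G \<alpha> W) S) = file_of \<alpha> j W"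
    using dec unfolding decodable_def by metis
  define R where "R W = restrict (stored G \<alpha> W) S" for W
  have inj: "inj_on R (carrier_vec (k * \<alpha>))"
  proof (rule inj_onI)
    fix W1 W2 :: "'f vec" assume w: "W1 \<in> carrier_vec (k*\<alpha>)" "W2 \<in> carrier_vec (k*\<alpha>)" "R W1 = R W2"
    have f: "file_of \<alpha> j W1 = file_of \<alpha> j W2" if "j \<in> {1..k}" for j
      using p[OF that w(1)] p[OF that w(2)] w(3) unfolding R_def by simp
    show "W1 = W2"
    proof (rule eq_vecI)
      show "dim_vec W1 = dim_vec W2" using w by simp
      fix x assume "x < dim_vec W2"
      then have x: "x < k * \<alpha>" using w by simp
      define j where "j = x div \<alpha> + 1"
      have xd: "x div \<alpha> < k" using x a by (simp add: less_mult_imp_div_less)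
      then have j: "j \<in> {1..k}" unfolding j_def by auto
      have m: "x mod \<alpha> < \<alpha>" using a by simp
      have e: "(j - 1) * \<alpha> + x mod \<alpha> = x" unfolding j_def by simp
      have "file_of \<alpha> j W1 $ (x mod \<alpha>) = file_of \<alpha> j W2 $ (x mod \<alpha>)" using f[OF j] by simp
      then show "W1 $ x = W2 $ x" using m e unfolding file_of_def by simp
    qed
  qed
  have sub: "R ` carrier_vec (k * \<alpha>) \<subseteq> PiE S (\<lambda>_. carrier_vec \<alpha>)"
    unfolding R_def stored_def by auto
  have fin2: "finite (PiE S (\<lambda>_. carrier_vec \<alpha> :: 'f vec set))"
    using fin by (intro finite_PiE) (auto intro: finite_carrier_vec_fin)
  have "card (carrier_vec (k * \<alpha>) :: 'f vec set) \<le> card (PiE S (\<lambda>_. carrier_vec \<alpha> :: 'f vec set))"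
    using card_inj_on_le[OF inj sub fin2] .
  then have le: "card (UNIV :: 'f set) ^ (k * \<alpha>) \<le> card (UNIV :: 'f set) ^ (\<alpha> * card S)"
    using fin by (simp add: card_PiE card_carrier_vec_fin power_mult)
  have c2: "2 \<le> card (UNIV :: 'f set)"
  proof -
    have "card {0::'f, 1} = 2" by simp
    moreover have "card {0::'f, 1} \<le> card (UNIV :: 'f set)" by (rule card_mono) auto
    ultimately show ?thesis by simp
  qed
  have "\<alpha> * card S < k * \<alpha>" using cS a by simp
  then have "card (UNIV :: 'f set) ^ (\<alpha> * card S) < card (UNIV :: 'f set) ^ (k * \<alpha>)"
    using c2 by (intro power_strict_increasing) auto
  with le show False by simp
qed

lemma sorted_count_less:
  fixes xs :: "'a::linorder list"
  assumes "sorted xs" "m < length xs"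
  shows "length (filter (\<lambda>x. x < xs ! m) xs) \<le> m"
proof -
  have "filter (\<lambda>x. x < xs ! m) (drop m xs) = []"
  proof -
    have "\<forall>y\<in>set (drop m xs). \<not> y < xs ! m"
    proof
      fix y assume "y \<in> set (drop m xs)"
      then obtain q where q: "q < length (drop m xs)" "y = drop m xs ! q" by (metis in_set_conv_nth)
      then have "y = xs ! (m + q)" "m + q < length xs" using assms by auto
      then show "\<not> y < xs ! m" using sorted_nth_mono[OF assms(1), of m "m+q"] by auto
    qed
    then show ?thesis by (simp add: filter_empty_conv)
  qed
  then have "filter (\<lambda>x. x < xs ! m) xs = filter (\<lambda>x. x < xs ! m) (take m xs)"
    by (metis append_Nil2 append_take_drop_id filter_append)
  then show ?thesis using assms by (metis length_filter_le length_take min.absorb2 less_imp_le)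
qed


lemma snap:
  fixes f :: "nat \<Rightarrow> real"
  assumes "finite A" "0 \<le> L"
  shows "\<exists>v \<in> insert 0 (f ` A). v \<le> L \<and> {t\<in>A. f t \<le> v} = {t\<in>A. f t \<le> L}"
proof -
  define B where "B = {v \<in> insert 0 (f ` A). v \<le> L}"
  have fB: "finite B" "B \<noteq> {}" using assms unfolding B_def by (simp, blast)
  define v where "v = Max B"
  have vB: "v \<in> B" using fB unfolding v_def by simp
  have "{t\<in>A. f t \<le> v} = {t\<in>A. f t \<le> L}"
  proof
    show "{t\<in>A. f t \<le> v} \<subseteq> {t\<in>A. f t \<le> L}" using vB unfolding B_def by auto
    show "{t\<in>A. f t \<le> L} \<subseteq> {t\<in>A. f t \<le> v}"
    proof
      fix t assume "t \<in> {t\<in>A. f t \<le> L}"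
      then have "f t \<in> B" unfolding B_def by blast
      then have "f t \<le> v" using fB(1) unfolding v_def by (simp add: Max_ge)
      then show "t \<in> {t\<in>A. f t \<le> v}" using \<open>t \<in> {t\<in>A. f t \<le> L}\<close> by blast
    qed
  qed
  moreover have "v \<in> insert 0 (f ` A)" "v \<le> L" using vB unfolding B_def by blast+
  ultimately show ?thesis by blast
qed

lemma least_exists:
  fixes f :: "nat \<Rightarrow> real"
  assumes "finite A" "\<forall>t\<in>A. 0 \<le> f t" "0 \<le> c" "D {t\<in>A. f t \<le> c}"
  shows "0 \<le> (LEAST L. 0 \<le> L \<and> D {t\<in>A. f t \<le> L}) \<and>
     D {t\<in>A. f t \<le> (LEAST L. 0 \<le> L \<and> D {t\<in>A. f t \<le> L})}
     \<and> (LEAST L. 0 \<le> L \<and> D {t\<in>A. f t \<le> L}) \<le> c"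
proof -
  define P where "P L = (0 \<le> L \<and> D {t\<in>A. f t \<le> L})" for L
  define V where "V = {v \<in> insert 0 (f ` A). P v}"
  have snapP: "\<exists>v \<in> V. v \<le> L" if PL: "P L" for L
  proof -
    obtain v where v: "v \<in> insert 0 (f ` A)" "v \<le> L" "{t\<in>A. f t \<le> v} = {t\<in>A. f t \<le> L}"
      using snap[OF assms(1), of L f] PL unfolding P_def by blast
    have "0 \<le> v" using v(1) assms(2) by auto
    then have "P v" using PL v(3) unfolding P_def by simp
    then show ?thesis using v unfolding V_def by auto
  qed
  have fV: "finite V" using assms(1) unfolding V_def by auto
  have Pc: "P c" using assms unfolding P_def by simp
  then have nV: "V \<noteq> {}" using snapP by auto
  define m where "m = Min V"
  have mV: "m \<in> V" using fV nV unfolding m_def by simp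
  have Pm: "P m" using mV unfolding V_def by simp
  have mle: "m \<le> L" if PL2: "P L" for L
  proof -
    obtain v where "v \<in> V" "v \<le> L" using snapP[OF PL2] by blast
    moreover have "Min V \<le> v" using fV \<open>v \<in> V\<close> by (rule Min_le)
    ultimately show ?thesis unfolding m_def by linarith
  qed
  have "(LEAST L. P L) = m" using Pm mle by (rule Least_equality)
  then show ?thesis using Pm mle[OF Pc] unfolding P_def by simp
qed


theorem proposition2:
  fixes n k \<alpha> :: nat and \<tau> :: "nat \<Rightarrow> nat \<Rightarrow> real"
    and G :: "'f :: {field, finite} mat" and E :: "(nat \<times> nat) set"
  assumes "1 \<le> k" and "k \<le> n" and "0 < \<alpha>"
    and "\<forall>i \<in> {1..n}. \<forall>j \<in> {1..n}. \<tau> i j = \<tau> j i"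
    and "\<forall>i \<in> {1..n}. \<tau> i i = 0"
    and "\<forall>i \<in> {1..n}. \<forall>j \<in> {1..n}. \<tau> i j \<ge> 0"
    and "nearest_neighbor_graph n k \<tau> E"
    and "linear_storage_code n k \<alpha> G"
    and "admissible n k \<alpha> G E"
  shows "\<forall>i \<in> {1..n}. L_max n \<tau> G k \<alpha> i = lam n \<tau> i (k - 1)"
proof
  fix i assume i: "i \<in> {1..n}"
  define f where "f t = \<tau> t i" for t
  define xs where "xs = rtt_sorted n \<tau> i"
  define c where "c = lam n \<tau> i (k - 1)"
  have lam_xs: "lam n \<tau> i m = xs ! m" for m unfolding lam_def xs_def by simp
  have sxs: "sorted xs" and lxs: "length xs = n" unfolding xs_def rtt_sorted_def by auto
  have setxs: "set xs = f ` {1..n}"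
    unfolding xs_def rtt_sorted_def f_def by (auto simp: atLeastLessThanSuc_atLeastAtMost)
  have fnn: "\<forall>t\<in>{1..n}. 0 \<le> f t" using assms(6) i unfolding f_def by blast
  have km: "k - 1 < n" using assms(1,2) by simp
  have cxs: "c = xs ! (k - 1)" unfolding c_def lam_xs ..
  have c0: "0 \<le> c"
  proof -
    have "c \<in> set xs" using cxs km lxs by simp
    then show ?thesis using setxs fnn by auto
  qed
  define A where "A = {1..n::nat}"
  have finA: "finite A" unfolding A_def by simp
  have nb: "{i} \<union> in_nbrs E i \<subseteq> {t\<in>A. f t \<le> c}"
  proof
    fix t assume t: "t \<in> {i} \<union> in_nbrs E i"
    show "t \<in> {t\<in>A. f t \<le> c}"
    proof (cases "t = i")
      case True
      then show ?thesis using i assms(5) c0 unfolding A_def f_def by auto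
    next
      case False
      then have tn: "t \<in> in_nbrs E i" using t by blast
      have nn: "E \<subseteq> {1..n} \<times> {1..n}"
        "image_mset (\<lambda>t. \<tau> t i) (mset_set (in_nbrs E i)) = mset (map (lam n \<tau> i) [1..<k])"
        using assms(7) i unfolding nearest_neighbor_graph_def by blast+
      have tA: "t \<in> A" using tn nn(1) unfolding in_nbrs_def A_def by blast
      have finN: "finite (in_nbrs E i)"
      proof (rule finite_subset)
        show "in_nbrs E i \<subseteq> {1..n}" using nn(1) unfolding in_nbrs_def by blast
      qed simp
      have "\<tau> t i \<in># image_mset (\<lambda>t. \<tau> t i) (mset_set (in_nbrs E i))"
        using tn finN by simp
      then have "\<tau> t i \<in> set (map (lam n \<tau> i) [1..<k])" using nn(2) by (metis set_mset_mset)
      then obtain m where m: "m < k" "\<tau> t i = xs ! m" using lam_xs by auto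
      have "xs ! m \<le> xs ! (k - 1)" using m(1) km lxs by (intro sorted_nth_mono[OF sxs]) auto
      then show ?thesis using tA m(2) cxs unfolding f_def by simp
    qed
  qed
  have dec_c: "decodable G k \<alpha> j {t\<in>A. f t \<le> c}" if j: "j \<in> {1..k}" for j
    using decodable_mono[OF _ nb] assms(9) i j unfolding admissible_def by blast
  have lat: "0 \<le> latency n \<tau> G k \<alpha> j i \<and> decodable G k \<alpha> j {t\<in>A. f t \<le> latency n \<tau> G k \<alpha> j i}
       \<and> latency n \<tau> G k \<alpha> j i \<le> c" if j: "j \<in> {1..k}" for j
    using least_exists[OF finA, of f c "decodable G k \<alpha> j"] fnn c0 dec_c[OF j]
    unfolding latency_def A_def f_def by simp
  have fin_img: "finite ((\<lambda>j. latency n \<tau> G k \<alpha> j i) ` {1..k})" "(\<lambda>j. latency n \<tau> G k \<alpha> j i) ` {1..k} \<noteq> {}"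
    using assms(1) by auto
  have up: "L_max n \<tau> G k \<alpha> i \<le> c"
    unfolding L_max_def using fin_img lat by (simp add: Max_le_iff)
  have low: "c \<le> L_max n \<tau> G k \<alpha> i"
  proof (rule ccontr)
    assume "\<not> c \<le> L_max n \<tau> G k \<alpha> i"
    then have lt: "latency n \<tau> G k \<alpha> j i < c" if "j \<in> {1..k}" for j
    proof -
      have "latency n \<tau> G k \<alpha> j i \<le> L_max n \<tau> G k \<alpha> i"
        unfolding L_max_def using fin_img(1) that by (intro Max_ge) auto
      then show ?thesis using \<open>\<not> c \<le> L_max n \<tau> G k \<alpha> i\<close> by linarith
    qed
    define S where "S = {t\<in>A. f t < c}"
    have decS: "\<forall>j\<in>{1..k}. decodable G k \<alpha> j S"
    proof
      fix j assume j: "j \<in> {1..k}"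
      have "{t\<in>A. f t \<le> latency n \<tau> G k \<alpha> j i} \<subseteq> S" using lt[OF j] unfolding S_def by auto
      then show "decodable G k \<alpha> j S" using decodable_mono lat[OF j] by blast
    qed
    have "card S = length (filter (\<lambda>t. f t < c) [1..<n+1])"
    proof -
      have "set [1..<n+1] = {1..n}" by auto
      then have "{t. f t < c} \<inter> set [1..<n+1] = S" unfolding S_def A_def by auto
      then show ?thesis by (simp add: distinct_length_filter)
    qed
    also have "\<dots> = length (filter (\<lambda>x. x < c) (map f [1..<n+1]))" by (simp add: filter_map comp_def)
    also have "\<dots> = length (filter (\<lambda>x. x < c) xs)"
    proof -
      have "mset xs = mset (map f [1..<n+1])" unfolding xs_def rtt_sorted_def f_def by simp
      then have "mset (filter (\<lambda>x. x < c) xs) = mset (filter (\<lambda>x. x < c) (map f [1..<n+1]))"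
        by simp
      then show ?thesis by (metis size_mset)
    qed
    also have "\<dots> \<le> k - 1" unfolding cxs using sorted_count_less[OF sxs] km lxs by simp
    finally have "card S < k" using assms(1) by simp
    moreover have "finite S" unfolding S_def using finA by simp
    ultimately show False using not_all_decodable[OF _ _ assms(3) decS] by blast
  qed
  show "L_max n \<tau> G k \<alpha> i = lam n \<tau> i (k - 1)" using up low unfolding c_def by simp
qed

end
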